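(* Let $\Lambda_V$ be a countable vertex space and $\Lambda_E$ an edge space containing a distinguished element $0$ (meaning "no edge"), and let $\mathcal{G}$ be a countable, projectable space of graphs over $(\Lambda_V,\Lambda_E)$ in which every graph has a finite vertex set. Let $P$ be a probability mass function on $\mathcal{G}$ satisfying the positivity condition: for all $G \in \mathcal{G}$, $P(G) > 0$ implies $P(G') > 0$ for every $G' \in S(G)$. Then $P$ can be written in Gibbs form, i.e. there exist a constant $\psi_0$ and functions $\psi_k : \mathcal{G}^{(k)} \to \mathbb{R} \cup \{-\infty\}$, $k = 1,2,\ldots$, such that for every $G \in \mathcal{G}$, $$P(G) = \exp\Big[\psi_0 + \sum_{G' \in S_1(G)} \psi_1(G') + \sum_{G' \in S_2(G)} \psi_2(G') + \cdots\Big].$$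
   Context: A graph is a pair $G=(V,E)$ with $V \subseteq \Lambda_V$ a (finite) set of vertices and $E : V \times V \to \Lambda_E$ an edge function, with no self loops ($E(v,v)=0$). The graph with no vertices is the empty graph $\emptyset$. For $V' \subseteq V$, the subgraph of $G$ induced by $V'$ is $G(V') = (V', E|_{V' \times V'})$. $S(G) = \{G(V') : V' \subseteq V\}$ is the set of all induced subgraphs of $G$ (including the empty graph), and $S_k(G) = \{G' \in S(G) : |V(G')| = k\}$, where $V(G)$ denotes the vertex set of $G$. A graph space $\mathcal{G}$ is projectable if $G \in \mathcal{G}$ implies $G' \in \mathcal{G}$ for all $G' \in S(G)$. $\mathcal{G}^{(k)} = \{(V,E) \in \mathcal{G} : |V| = k\}$ denotes the graphs of order $k$ in $\mathcal{G}$. The convention $\exp(-\infty)=0$ is used. *)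

theory Defs
  imports "HOL-Probability.Probability_Mass_Function" "HOL-Library.Extended_Real"
    "HOL-Library.Countable_Set"
begin

text \<open>The edge function E : V x V -> Lambda_E is represented by a total function
  that is extended by 0 outside V x V, so that every graph has a unique representation.\<close>

type_synonym ('v, 'e) graph = "'v set \<times> ('v \<Rightarrow> 'v \<Rightarrow> 'e)"

definition gV :: "('v, 'e) graph \<Rightarrow> 'v set" where
  "gV G = fst G"

definition gE :: "('v, 'e) graph \<Rightarrow> 'v \<Rightarrow> 'v \<Rightarrow> 'e" where
  "gE G = snd G"

definition is_graph :: "('v, 'e::zero) graph \<Rightarrow> bool" where
  "is_graph G \<longleftrightarrow> (\<forall>v. gE G v v = 0) \<and>
     (\<forall>x y. (x \<notin> gV G \<or> y \<notin> gV G) \<longrightarrow> gE G x y = 0)"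

definition induced :: "('v, 'e::zero) graph \<Rightarrow> 'v set \<Rightarrow> ('v, 'e) graph" where
  "induced G V' = (V', \<lambda>x y. if x \<in> V' \<and> y \<in> V' then gE G x y else 0)"

definition Sub :: "('v, 'e::zero) graph \<Rightarrow> ('v, 'e) graph set" where
  "Sub G = {induced G V' | V'. V' \<subseteq> gV G}"

definition Sub_k :: "nat \<Rightarrow> ('v, 'e::zero) graph \<Rightarrow> ('v, 'e) graph set" where
  "Sub_k k G = {G' \<in> Sub G. card (gV G') = k}"

definition projectable :: "('v, 'e::zero) graph set \<Rightarrow> bool" where
  "projectable \<G> \<longleftrightarrow> (\<forall>G\<in>\<G>. \<forall>G'\<in>Sub G. G' \<in> \<G>)"

definition exp_ereal :: "ereal \<Rightarrow> real" where
  "exp_ereal x = (if x = -\<infinity> then 0 else exp (real_of_ereal x))"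

end

theory Submission
  imports Defs
begin

function psiF :: "('v, 'e::zero) graph pmf \<Rightarrow> real \<Rightarrow> nat \<Rightarrow> ('v, 'e) graph \<Rightarrow> ereal" where
  "psiF P c n H = (if pmf P H = 0 then -\<infinity> else
     (let s = (\<Sum>k\<in>{1..<n}. \<Sum>G'\<in>Sub_k k H. psiF P c k G') in
      if s = -\<infinity> then -\<infinity> else ereal (ln (pmf P H)) - ereal c - s))"
  by pat_completeness auto
termination
  by (relation "Wellfounded.measure (\<lambda>(P,c,n,H). n)") auto

declare psiF.simps[simp del]

lemma sum_fin_ereal:
  fixes f :: "'a \<Rightarrow> ereal"
  assumes "\<forall>x\<in>A. f x \<noteq> \<infinity> \<and> f x \<noteq> -\<infinity>"
  shows "\<exists>r. sum f A = ereal r"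
proof -
  have "sum f A = (\<Sum>x\<in>A. ereal (real_of_ereal (f x)))"
    using assms by (intro sum.cong) (auto simp: ereal_real)
  thus ?thesis by simp
qed

lemma psiF_not_inf: "psiF P c n H \<noteq> \<infinity>"
proof (induction P c n H rule: psiF.induct)
  case (1 P c n H)
  define s where "s = (\<Sum>k\<in>{1..<n}. \<Sum>G'\<in>Sub_k k H. psiF P c k G')"
  show ?case
  proof (cases "pmf P H = 0 \<or> s = -\<infinity>")
    case True thus ?thesis by (subst psiF.simps) (auto simp: s_def Let_def)
  next
    case False
    have "s \<noteq> \<infinity>" unfolding s_def sum_Pinfty using 1 False by fastforce
    then obtain r where "s = ereal r" using \<open>s \<noteq> \<infinity>\<close> False by (cases s) auto
    moreover have "psiF P c n H = ereal (ln (pmf P H)) - ereal c - s"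
      using False by (subst psiF.simps) (simp only: s_def Let_def if_False de_Morgan_disj simp_thms if_not_P)
    ultimately show ?thesis by simp
  qed
qed



lemma induced_self: "is_graph G \<Longrightarrow> induced G (gV G) = G"
  unfolding is_graph_def induced_def gV_def gE_def
  by (cases G) (auto intro!: ext)

lemma Sub_k_top:
  assumes "is_graph G" "finite (gV G)"
  shows "Sub_k (card (gV G)) G = {G}"
proof -
  have "V' = gV G" if "V' \<subseteq> gV G" "card V' = card (gV G)" for V'
    using that assms(2) card_subset_eq by blast
  moreover have "gV (induced G V') = V'" for V' by (simp add: induced_def gV_def)
  moreover have "G \<in> Sub G" unfolding Sub_def using induced_self[OF assms(1)]
    by (metis (mono_tags, lifting) mem_Collect_eq order_refl)
  ultimately show ?thesis
    using induced_self[OF assms(1)] unfolding Sub_k_def Sub_def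
    by (auto simp del: induced_self) metis
qed

lemma psiF_pos:
  fixes \<G> :: "('v, 'e::zero) graph set"
  assumes proj: "projectable \<G>"
    and fin: "\<forall>G\<in>\<G>. finite (gV G)"
    and positivity: "\<forall>G\<in>\<G>. pmf P G > 0 \<longrightarrow> (\<forall>G'\<in>Sub G. pmf P G' > 0)"
  shows "H \<in> \<G> \<Longrightarrow> pmf P H > 0 \<Longrightarrow> psiF P c (card (gV H)) H \<noteq> -\<infinity>"
proof (induction "card (gV H)" arbitrary: H rule: less_induct)
  case less
  define n where "n = card (gV H)"
  define s where "s = (\<Sum>k\<in>{1..<n}. \<Sum>G'\<in>Sub_k k H. psiF P c k G')"
  have summ: "psiF P c k G' \<noteq> -\<infinity>" if "k \<in> {1..<n}" "G' \<in> Sub_k k H" for k G'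
  proof -
    have G'S: "G' \<in> Sub H" "card (gV G') = k" using that(2) by (auto simp: Sub_k_def)
    have "G' \<in> \<G>" using proj less.prems(1) G'S unfolding projectable_def by blast
    moreover have "pmf P G' > 0" using positivity less.prems G'S by blast
    ultimately show ?thesis using less.hyps[of G'] G'S that(1) n_def by auto
  qed
  have "\<exists>r. (\<Sum>G'\<in>Sub_k k H. psiF P c k G') = ereal r" if "k \<in> {1..<n}" for k
    by (intro sum_fin_ereal ballI conjI psiF_not_inf summ[OF that])
  then obtain r where "s = ereal r" unfolding s_def
    using sum_fin_ereal[of "{1..<n}" "\<lambda>k. \<Sum>G'\<in>Sub_k k H. psiF P c k G'"] by force
  moreover have "psiF P c n H = (if pmf P H = 0 then -\<infinity> else if s = -\<infinity> then -\<infinity>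
       else ereal (ln (pmf P H)) - ereal c - s)"
    by (subst psiF.simps) (simp only: s_def Let_def)
  ultimately show ?case using less.prems n_def by simp
qed

theorem theorem2p1:
  fixes \<G> :: "('v::countable, 'e::zero) graph set"
    and P :: "('v, 'e) graph pmf"
  assumes graphs: "\<forall>G\<in>\<G>. is_graph G"
    and countable_space: "countable \<G>"
    and proj: "projectable \<G>"
    and fin: "\<forall>G\<in>\<G>. finite (gV G)"
    and support: "set_pmf P \<subseteq> \<G>"
    and positivity: "\<forall>G\<in>\<G>. pmf P G > 0 \<longrightarrow> (\<forall>G'\<in>Sub G. pmf P G' > 0)"
  shows "\<exists>(\<psi>0::real) (\<psi>::nat \<Rightarrow> ('v, 'e) graph \<Rightarrow> ereal).
           (\<forall>k G. \<psi> k G \<noteq> \<infinity>) \<and>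
           (\<forall>G\<in>\<G>. pmf P G =
              exp_ereal (ereal \<psi>0 + (\<Sum>k\<in>{1..card (gV G)}. \<Sum>G'\<in>Sub_k k G. \<psi> k G')))"
proof -
  define E0 :: "('v, 'e) graph" where "E0 = ({}, \<lambda>x y. 0)"
  obtain G0 where G0: "G0 \<in> set_pmf P" using set_pmf_not_empty[of P] by blast
  have G0G: "G0 \<in> \<G>" using G0 support by blast
  have "induced G0 {} \<in> Sub G0" unfolding Sub_def by blast
  moreover have "induced G0 {} = E0" unfolding induced_def E0_def by auto
  ultimately have PE0: "pmf P E0 > 0" using positivity G0G G0
    by (metis pmf_positive)
  define c where "c = ln (pmf P E0)"
  have "\<forall>G\<in>\<G>. pmf P G =
              exp_ereal (ereal c + (\<Sum>k\<in>{1..card (gV G)}. \<Sum>G'\<in>Sub_k k G. psiF P c k G'))"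
  proof
    fix G assume GG: "G \<in> \<G>"
    define n where "n = card (gV G)"
    show "pmf P G = exp_ereal (ereal c + (\<Sum>k\<in>{1..card (gV G)}. \<Sum>G'\<in>Sub_k k G. psiF P c k G'))"
    proof (cases "n = 0")
      case True
      then have "gV G = {}" using fin GG n_def by auto
      then have "G = E0" using graphs GG unfolding is_graph_def E0_def gV_def gE_def
        by (cases G) (auto intro!: ext)
      then show ?thesis using True n_def PE0 by (simp add: exp_ereal_def c_def)
    next
      case False
      define s where "s = (\<Sum>k\<in>{1..<n}. \<Sum>G'\<in>Sub_k k G. psiF P c k G')"
      have "{1..n} = insert n {1..<n}" using False by auto
      then have tot: "(\<Sum>k\<in>{1..card (gV G)}. \<Sum>G'\<in>Sub_k k G. psiF P c k G')
          = psiF P c n G + s"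
        using Sub_k_top[of G] graphs fin GG by (simp add: n_def s_def)
      have sI: "s \<noteq> \<infinity>" unfolding s_def sum_Pinfty using psiF_not_inf by blast
      have psi_eq: "psiF P c n G = (if pmf P G = 0 then -\<infinity> else if s = -\<infinity> then -\<infinity>
         else ereal (ln (pmf P G)) - ereal c - s)"
        by (subst psiF.simps) (simp only: s_def Let_def)
      show ?thesis
      proof (cases "pmf P G = 0")
        case True
        then show ?thesis using tot psi_eq sI by (simp add: exp_ereal_def)
      next
        case F2: False
        then have pos: "pmf P G > 0" by (simp add: order_less_le)
        have "psiF P c n G \<noteq> -\<infinity>"
          using psiF_pos[OF proj fin positivity GG pos] n_def by simp
        then have "s \<noteq> -\<infinity>" using psi_eq by (metis (full_types))
        then obtain r where r: "s = ereal r" using sI by (cases s) auto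
        then have "psiF P c n G = ereal (ln (pmf P G) - c - r)" using psi_eq F2 by simp
        then show ?thesis using tot r pos by (simp add: exp_ereal_def)
      qed
    qed
  qed
  then show ?thesis using psiF_not_inf by blast
qed

end
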